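(* Let $r\ge 2$ and $m$ be integers with $0\le 2m\le r$, $n=2r-4m$, and let $f:S^2(S^r(\mathbb{C}^2))\to S^{n}(\mathbb{C}^2)$ be an $\mathfrak{sl}_2(\mathbb{C})$-equivariant linear map, written $f=\sum_{k=0}^n q_k w_k$. Then there is $\lambda\in\mathbb{C}$ such that for all $0\le i,j\le r$, $$q_0(x_ix_j)=\begin{cases}(-1)^i\binom{2m}{i}\lambda & \text{if } j=2m-i,\\ 0&\text{otherwise.}\end{cases}$$ In particular, if $\lambda\in\mathbb{Q}$, then $q_k(x_ix_j)\in\mathbb{Q}$ for every $0\le k\le n$ and $0\le i,j\le r$.
   Context: $\mathfrak{sl}_2(\mathbb{C})$ has basis $X=\begin{pmatrix}0&1\\0&0\end{pmatrix}$, $H=\begin{pmatrix}1&0\\0&-1\end{pmatrix}$, $Y=\begin{pmatrix}0&0\\1&0\end{pmatrix}$, acting on the irreducible modules $S^d(\mathbb{C}^2)$. Let $x_0\in S^r(\mathbb{C}^2)$ be a highest weight vector and $x_i=Y^ix_0/i!$ ($0\le i\le r$), so $Yx_i=(i+1)x_{i+1}$, $Xx_i=(r-i+1)x_{i-1}$, $Hx_i=(r-2i)x_i$. Let $w_0\in S^n(\mathbb{C}^2)$ be a highest weight vector and $w_k=Y^kw_0/k!$ ($0\le k\le n$). Writing $f=\sum_{k=0}^n q_kw_k$ means $f(u)=\sum_k q_k(u)w_k$ for linear forms $q_k$ on $S^2(S^r(\mathbb{C}^2))$; $q_k(x_ix_j)$ denotes the value on the product $x_ix_j\in S^2(S^r(\mathbb{C}^2))$.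 *)

theory Defs
  imports Complex_Main
begin

datatype sl2gen = GX | GY | GH

text \<open>Action of a generator on S^d(C^2), vectors given by coefficient functions
  v :: nat => complex w.r.t. the basis v_0,...,v_d with v_i = Y^i v_0 / i!
  (coefficients at indices > d are ignored/zero).\<close>
fun sl2_act :: "sl2gen \<Rightarrow> nat \<Rightarrow> (nat \<Rightarrow> complex) \<Rightarrow> nat \<Rightarrow> complex" where
  "sl2_act GY d v k = (if 1 \<le> k \<and> k \<le> d then of_nat k * v (k - 1) else 0)"
| "sl2_act GX d v k = (if k < d then of_nat (d - k) * v (Suc k) else 0)"
| "sl2_act GH d v k = (if k \<le> d then (of_nat d - 2 * of_nat k) * v k else 0)"

definition basis_vec :: "nat \<Rightarrow> nat \<Rightarrow> complex" where
  "basis_vec i = (\<lambda>a. if a = i then 1 else 0)"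

text \<open>A linear map f : S^2(S^r(C^2)) -> S^n(C^2) is given by its values on the
  products x_i x_j (0 <= i,j <= r): F i j k = q_k(x_i x_j), the coefficient of w_k
  in f(x_i x_j).  Since x_i x_j = x_j x_i, F i j = F j i.  Equivariance is
  f(Z.(x_i x_j)) = Z.f(x_i x_j) for the generators Z, where
  Z.(x_i x_j) = (Z x_i) x_j + x_i (Z x_j).\<close>
definition sym2_map :: "nat \<Rightarrow> nat \<Rightarrow> (nat \<Rightarrow> nat \<Rightarrow> nat \<Rightarrow> complex) \<Rightarrow> bool" where
  "sym2_map r n F \<longleftrightarrow>
     (\<forall>i\<le>r. \<forall>j\<le>r. F i j = F j i) \<and>
     (\<forall>i\<le>r. \<forall>j\<le>r. \<forall>k>n. F i j k = 0)"

definition sl2_equivariant_sym2 :: "nat \<Rightarrow> nat \<Rightarrow> (nat \<Rightarrow> nat \<Rightarrow> nat \<Rightarrow> complex) \<Rightarrow> bool" where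
  "sl2_equivariant_sym2 r n F \<longleftrightarrow> sym2_map r n F \<and>
     (\<forall>g. \<forall>i\<le>r. \<forall>j\<le>r.
        (\<lambda>k. (\<Sum>a\<le>r. sl2_act g r (basis_vec i) a * F a j k)
            + (\<Sum>b\<le>r. sl2_act g r (basis_vec j) b * F i b k))
        = sl2_act g n (F i j))"

end

theory Submission
  imports Defs
begin

lemma sumY:
  assumes "i \<le> r"
  shows "(\<Sum>a\<le>r. sl2_act GY r (basis_vec i) a * G a) = (if i < r then of_nat (Suc i) * G (Suc i) else 0)"
proof -
  have "\<And>a. sl2_act GY r (basis_vec i) a * G a = (if a = Suc i then (if Suc i \<le> r then of_nat (Suc i) * G (Suc i) else 0) else 0)"
    by (auto simp: basis_vec_def)
  then have "(\<Sum>a\<le>r. sl2_act GY r (basis_vec i) a * G a) = (\<Sum>a\<le>r. (if a = Suc i then (if Suc i \<le> r then of_nat (Suc i) * G (Suc i) else 0) else 0))"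
    by (simp only:)
  also have "\<dots> = (if i < r then of_nat (Suc i) * G (Suc i) else 0)"
    by (simp add: sum.delta)
  finally show ?thesis .
qed

lemma sumX:
  assumes "i \<le> r"
  shows "(\<Sum>a\<le>r. sl2_act GX r (basis_vec i) a * G a) = (if 1 \<le> i then of_nat (r - i + 1) * G (i - 1) else 0)"
proof -
  have "\<And>a. sl2_act GX r (basis_vec i) a * G a = (if a = i - 1 then (if 1 \<le> i then of_nat (r - i + 1) * G (i - 1) else 0) else 0)"
    using assms by (auto simp: basis_vec_def Suc_diff_le)
  then have "(\<Sum>a\<le>r. sl2_act GX r (basis_vec i) a * G a) = (\<Sum>a\<le>r. (if a = i - 1 then (if 1 \<le> i then of_nat (r - i + 1) * G (i - 1) else 0) else 0))"
    by (simp only:)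
  also have "\<dots> = (if 1 \<le> i then of_nat (r - i + 1) * G (i - 1) else 0)"
    using assms by (auto simp add: sum.delta)
  finally show ?thesis .
qed

lemma sumH:
  assumes "i \<le> r"
  shows "(\<Sum>a\<le>r. sl2_act GH r (basis_vec i) a * G a) = (of_nat r - 2 * of_nat i) * G i"
proof -
  have "\<And>a. sl2_act GH r (basis_vec i) a * G a = (if a = i then (of_nat r - 2 * of_nat i) * G i else 0)"
    using assms by (auto simp: basis_vec_def)
  then have "(\<Sum>a\<le>r. sl2_act GH r (basis_vec i) a * G a) = (\<Sum>a\<le>r. (if a = i then (of_nat r - 2 * of_nat i) * G i else 0))"
    by (simp only:)
  then show ?thesis using assms by (simp add: sum.delta)
qed

theorem mainTheorem2:
  fixes r m n :: nat and F :: "nat \<Rightarrow> nat \<Rightarrow> nat \<Rightarrow> complex"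
  assumes "r \<ge> 2" and "2 * m \<le> r" and "n = 2 * r - 4 * m"
    and "sl2_equivariant_sym2 r n F"
  shows "\<exists>lam::complex.
     (\<forall>i\<le>r. \<forall>j\<le>r. F i j 0 =
        (if j + i = 2 * m then (-1) ^ i * of_nat (2 * m choose i) * lam else 0)) \<and>
     (lam \<in> \<rat> \<longrightarrow> (\<forall>k\<le>n. \<forall>i\<le>r. \<forall>j\<le>r. F i j k \<in> \<rat>))"
proof -
  have eq: "\<And>g i j k. i \<le> r \<Longrightarrow> j \<le> r \<Longrightarrow>
     (\<Sum>a\<le>r. sl2_act g r (basis_vec i) a * F a j k) + (\<Sum>b\<le>r. sl2_act g r (basis_vec j) b * F i b k)
      = sl2_act g n (F i j) k"
  proof -
    fix g i j k assume ij: "i \<le> r" "j \<le> r"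
    have "\<forall>g. \<forall>i\<le>r. \<forall>j\<le>r.
        (\<lambda>k. (\<Sum>a\<le>r. sl2_act g r (basis_vec i) a * F a j k)
            + (\<Sum>b\<le>r. sl2_act g r (basis_vec j) b * F i b k))
        = sl2_act g n (F i j)" using assms(4) unfolding sl2_equivariant_sym2_def by blast
    then have "(\<lambda>k. (\<Sum>a\<le>r. sl2_act g r (basis_vec i) a * F a j k)
            + (\<Sum>b\<le>r. sl2_act g r (basis_vec j) b * F i b k))
        = sl2_act g n (F i j)" using ij by blast
    then show "(\<Sum>a\<le>r. sl2_act g r (basis_vec i) a * F a j k) + (\<Sum>b\<le>r. sl2_act g r (basis_vec j) b * F i b k)
      = sl2_act g n (F i j) k" by (rule fun_cong)
  qed
  have H: "\<And>i j. i \<le> r \<Longrightarrow> j \<le> r \<Longrightarrow> (of_nat r - 2 * of_nat i + (of_nat r - 2 * of_nat j)) * F i j 0 = (of_nat n :: complex) * F i j 0"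
  proof -
    fix i j assume ij: "i \<le> r" "j \<le> r"
    have "(of_nat r - 2 * of_nat i) * F i j 0 + (of_nat r - 2 * of_nat j) * F i j 0 = sl2_act GH n (F i j) 0"
      using eq[OF ij, of GH 0] sumH[OF ij(1), of "\<lambda>a. F a j 0"] sumH[OF ij(2), of "\<lambda>b. F i b 0"] by simp
    then show "(of_nat r - 2 * of_nat i + (of_nat r - 2 * of_nat j)) * F i j 0 = (of_nat n :: complex) * F i j 0"
      by (simp add: algebra_simps)
  qed
  have zero: "F i j 0 = 0" if ij: "i \<le> r" "j \<le> r" "j + i \<noteq> 2 * m" for i j
  proof -
    have nn: "(of_nat n :: complex) = 2 * of_nat r - 4 * of_nat m"
      using assms(2,3) by (simp add: of_nat_diff)
    have "(4 * of_nat m - 2 * of_nat i - 2 * of_nat j) * F i j 0 = 0"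
      using H[OF ij(1,2)] unfolding nn by (simp add: algebra_simps)
    moreover have "(4 * of_nat m - 2 * of_nat i - 2 * of_nat j :: complex) \<noteq> 0"
    proof
      assume "(4 * of_nat m - 2 * of_nat i - 2 * of_nat j :: complex) = 0"
      then have "(of_nat (4 * m) :: complex) = of_nat (2 * i + 2 * j)" by (simp add: algebra_simps)
      then have "4 * m = 2 * i + 2 * j" using of_nat_eq_iff by blast
      then show False using that(3) by simp
    qed
    ultimately show ?thesis by simp
  qed
  have Y0: "of_nat (Suc i) * F (Suc i) j 0 + of_nat (Suc j) * F i (Suc j) 0 = 0"
    if "i < r" "j < r" for i j
    using eq[of i j GY 0] sumY[of i r "\<lambda>a. F a j 0"] sumY[of j r "\<lambda>b. F i b 0"] that by simp
  define lam where "lam = F 0 (2 * m) 0"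
  have diag: "F i (2 * m - i) 0 = (-1) ^ i * of_nat (2 * m choose i) * lam" if "i \<le> 2 * m" for i
    using that
  proof (induction i)
    case 0 then show ?case by (simp add: lam_def)
  next
    case (Suc i)
    have ir: "i < r" "2 * m - Suc i < r" using Suc.prems assms(2) by auto
    have e: "of_nat (Suc i) * F (Suc i) (2 * m - Suc i) 0 + of_nat (Suc (2 * m - Suc i)) * F i (Suc (2 * m - Suc i)) 0 = 0"
      using Y0[OF ir] .
    have s: "Suc (2 * m - Suc i) = 2 * m - i" using Suc.prems by simp
    have IH: "F i (2 * m - i) 0 = (-1) ^ i * of_nat (2 * m choose i) * lam" using Suc by simp
    have ch: "of_nat (Suc i) * of_nat (2 * m choose Suc i) = (of_nat (2 * m - i) * of_nat (2 * m choose i) :: complex)"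
    proof -
      have "(2 * m choose Suc i) * Suc i = (2 * m choose i) * (2 * m - i)"
        using binomial_absorption[of i "2 * m"] binomial_absorb_comp[of "2 * m" i] by (simp add: mult.commute)
      then show ?thesis by (metis mult.commute of_nat_mult)
    qed
    have e2: "of_nat (Suc i) * F (Suc i) (2 * m - Suc i) 0 = - (of_nat (2 * m - i) * ((-1) ^ i * of_nat (2 * m choose i) * lam))"
      using e unfolding s IH by (simp add: eq_neg_iff_add_eq_0)
    also have "\<dots> = - (((-1) ^ i * lam) * (of_nat (2 * m - i) * of_nat (2 * m choose i)))"
      by (simp add: algebra_simps)
    also have "\<dots> = - (((-1) ^ i * lam) * (of_nat (Suc i) * of_nat (2 * m choose Suc i)))"
      by (simp only: ch)
    also have "\<dots> = of_nat (Suc i) * ((-1) ^ Suc i * of_nat (2 * m choose Suc i) * lam)"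
      by (simp add: algebra_simps)
    finally have "of_nat (Suc i) * F (Suc i) (2 * m - Suc i) 0 = of_nat (Suc i) * ((-1) ^ Suc i * of_nat (2 * m choose Suc i) * lam)" .
    moreover have nz: "(of_nat (Suc i)::complex) \<noteq> 0" by (simp only: of_nat_eq_0_iff)
    ultimately show ?case using mult_left_cancel[OF nz] by blast
  qed
  have part1: "\<forall>i\<le>r. \<forall>j\<le>r. F i j 0 =
        (if j + i = 2 * m then (-1) ^ i * of_nat (2 * m choose i) * lam else 0)"
  proof (intro allI impI)
    fix i j assume ij: "i \<le> r" "j \<le> r"
    show "F i j 0 = (if j + i = 2 * m then (-1) ^ i * of_nat (2 * m choose i) * lam else 0)"
    proof (cases "j + i = 2 * m")
      case True
      then have "j = 2 * m - i" "i \<le> 2 * m" by auto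
      then show ?thesis using diag True by simp
    next
      case False then show ?thesis using zero ij by simp
    qed
  qed
  have X: "of_nat (n - k) * F i j (Suc k) = (if 1 \<le> i then of_nat (r - i + 1) * F (i - 1) j k else 0) + (if 1 \<le> j then of_nat (r - j + 1) * F i (j - 1) k else 0)"
    if "i \<le> r" "j \<le> r" "k < n" for i j k
    using eq[of i j GX k] sumX[of i r "\<lambda>a. F a j k"] sumX[of j r "\<lambda>b. F i b k"] that by simp
  have part2: "lam \<in> \<rat> \<Longrightarrow> k \<le> n \<Longrightarrow> \<forall>i\<le>r. \<forall>j\<le>r. F i j k \<in> \<rat>" for k
  proof (induction k)
    case 0 then show ?case using part1 by auto
  next
    case (Suc k)
    show ?case
    proof (intro allI impI)
      fix i j assume ij: "i \<le> r" "j \<le> r"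
      have kn: "k < n" using Suc by simp
      have IH: "\<forall>i\<le>r. \<forall>j\<le>r. F i j k \<in> \<rat>" using Suc by simp
      have nz: "(of_nat (n - k) :: complex) \<noteq> 0" using kn by simp
      have "F i j (Suc k) = ((if 1 \<le> i then of_nat (r - i + 1) * F (i - 1) j k else 0) + (if 1 \<le> j then of_nat (r - j + 1) * F i (j - 1) k else 0)) / of_nat (n - k)"
        using X[OF ij kn] nz by (simp add: field_simps)
      moreover have "F (i - 1) j k \<in> \<rat>" "F i (j - 1) k \<in> \<rat>" using IH ij by auto
      ultimately show "F i j (Suc k) \<in> \<rat>" by (simp add: Rats_add Rats_mult Rats_divide)
    qed
  qed
  show ?thesis using part1 part2 by blast
qed

end
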